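(* Let $m\ge3$ be an odd integer and $q$ an odd prime, and set $n'=\left\lceil\frac{q}{q-1}\left(q^{m-1}-q^{m-2}-q^{\frac{m-3}{2}}\right)\right\rceil-q^{m-1}+q^{m-2}-q^{\frac{m-3}{2}}$. Let $\mathbf{C}$ be a $q$-ary linear $[q^{m-1},m]$ code whose set of nonzero weights is $\{q^{m-1}-q^{m-2}-q^{\frac{m-3}{2}},\,q^{m-1}-q^{m-2},\,q^{m-1}-q^{m-2}+q^{\frac{m-3}{2}}\}$. Then the code $\mathbf{C}'$ obtained from $\mathbf{C}$ by the extension construction is a minimal $[q^{m-1}+n',\ m,\ q^{m-1}-q^{m-2}-q^{\frac{m-3}{2}}]_q$ code with maximum weight $q^{m-1}-q^{m-2}+q^{\frac{m-3}{2}}+n'$, and it violates the Ashikhmin–Barg condition.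
   Context: Extension construction for a $q$-ary linear $[N,K]$ code $\mathbf{D}$ with $K\ge2$, minimum nonzero weight $w_{min}$, maximum weight $w_{max}$ and $n'=\lceil\frac{qw_{min}}{q-1}\rceil-w_{max}\ge1$: choose a basis $\mathbf{r}_1,\dots,\mathbf{r}_K$ with $wt(\mathbf{r}_1)=w_{max}$, $wt(\mathbf{r}_2)=w_{min}$, and $\mathbf{a}\in(\mathbf{F}_q^* )^{n'}$; the extended code is generated by $(\mathbf{a},\mathbf{r}_1),(\mathbf{0},\mathbf{r}_2),\dots,(\mathbf{0},\mathbf{r}_K)$ in $\mathbf{F}_q^{n'+N}$. A code is minimal if any two nonzero codewords $\mathbf{c},\mathbf{c}'$ with $supp(\mathbf{c}')\subseteq supp(\mathbf{c})$ satisfy $\mathbf{c}'=\lambda\mathbf{c}$ with $\lambda\in\mathbf{F}_q^*$. Ashikhmin–Barg condition: $w_{min}/w_{max}>(q-1)/q$. *)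

theory Defs
  imports Complex_Main "HOL-Library.Function_Algebras" "HOL-Computational_Algebra.Primes"
begin

text \<open>Words of length N over a finite field 'a are modelled as functions
  nat => 'a vanishing outside {0..<N}.  Scalar multiplication is pointwise.\<close>

definition sc :: "'a::field \<Rightarrow> (nat \<Rightarrow> 'a) \<Rightarrow> (nat \<Rightarrow> 'a)" where
  "sc c v = (\<lambda>i. c * v i)"

lemma vector_space_sc: "vector_space (sc :: 'a::field \<Rightarrow> _)"
  by unfold_locales (auto simp: sc_def fun_eq_iff algebra_simps)

definition words :: "nat \<Rightarrow> (nat \<Rightarrow> 'a::zero) set" where
  "words N = {v. \<forall>i\<ge>N. v i = 0}"

definition supp :: "(nat \<Rightarrow> 'a::zero) \<Rightarrow> nat set" where
  "supp v = {i. v i \<noteq> 0}"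

definition wt :: "(nat \<Rightarrow> 'a::zero) \<Rightarrow> nat" where
  "wt v = card (supp v)"

definition linear_code :: "nat \<Rightarrow> nat \<Rightarrow> (nat \<Rightarrow> 'a::field) set \<Rightarrow> bool" where
  "linear_code N K C \<longleftrightarrow> C \<subseteq> words N \<and> module.subspace sc C \<and> vector_space.dim sc C = K"

definition nonzero_weights :: "(nat \<Rightarrow> 'a::zero) set \<Rightarrow> nat set" where
  "nonzero_weights C = {wt c | c. c \<in> C \<and> c \<noteq> 0}"

definition min_weight :: "(nat \<Rightarrow> 'a::zero) set \<Rightarrow> nat" where
  "min_weight C = Min (nonzero_weights C)"

definition max_weight :: "(nat \<Rightarrow> 'a::zero) set \<Rightarrow> nat" where
  "max_weight C = Max (nonzero_weights C)"

definition minimal_code :: "(nat \<Rightarrow> 'a::field) set \<Rightarrow> bool" where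
  "minimal_code C \<longleftrightarrow> (\<forall>c\<in>C. \<forall>c'\<in>C. c \<noteq> 0 \<and> c' \<noteq> 0 \<and> supp c' \<subseteq> supp c
      \<longrightarrow> (\<exists>l. l \<noteq> 0 \<and> c' = sc l c))"

definition ashikhmin_barg :: "nat \<Rightarrow> (nat \<Rightarrow> 'a::zero) set \<Rightarrow> bool" where
  "ashikhmin_barg q C \<longleftrightarrow>
     real (min_weight C) / real (max_weight C) > (real q - 1) / real q"

definition concat_word :: "nat \<Rightarrow> (nat \<Rightarrow> 'a::zero) \<Rightarrow> (nat \<Rightarrow> 'a) \<Rightarrow> (nat \<Rightarrow> 'a)" where
  "concat_word n a r = (\<lambda>i. if i < n then a i else r (i - n))"

definition extension_code ::
  "nat \<Rightarrow> (nat \<Rightarrow> 'a::field) \<Rightarrow> (nat \<Rightarrow> 'a) list \<Rightarrow> (nat \<Rightarrow> 'a) set" where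
  "extension_code n a rs = module.span sc
     (insert (concat_word n a (rs ! 0)) ((\<lambda>r. concat_word n 0 r) ` set (tl rs)))"

end

theory Submission
  imports Defs
begin

interpretation V: vector_space "sc :: 'a::field \<Rightarrow> (nat \<Rightarrow> 'a) \<Rightarrow> _"
  by (rule vector_space_sc)

lemma sum_fun_apply: "(\<Sum>i\<in>A. f i) (x::'b) = (\<Sum>i\<in>A. (f i x :: 'c::comm_monoid_add))"
  by (induction A rule: infinite_finite_induct) auto

definition lin :: "(nat \<Rightarrow> 'a::field) list \<Rightarrow> (nat \<Rightarrow> 'a) \<Rightarrow> (nat \<Rightarrow> 'a)" where
  "lin l u = (\<Sum>i<length l. sc (u i) (l!i))"

lemma lin_apply: "lin l u j = (\<Sum>i<length l. u i * (l!i) j)"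
  by (simp add: lin_def sum_fun_apply sc_def)

lemma span_list: "V.span (set l) = range (lin l)"
proof
  show "range (lin l) \<subseteq> V.span (set l)"
  proof
    fix x assume "x \<in> range (lin l)"
    then obtain u where "x = lin l u" by auto
    then show "x \<in> V.span (set l)"
      unfolding lin_def by (simp, intro V.span_sum V.span_scale V.span_base) auto
  qed
  show "V.span (set l) \<subseteq> range (lin l)"
  proof (rule V.span_minimal)
    show "set l \<subseteq> range (lin l)"
    proof
      fix x assume "x \<in> set l"
      then obtain j where j: "j < length l" "x = l!j" by (auto simp: in_set_conv_nth)
      have "lin l (\<lambda>i. if i = j then 1 else 0) = x"
      proof
        fix y
        have "lin l (\<lambda>i. if i = j then 1 else 0) y = (\<Sum>i<length l. if i = j then (l!i) y else 0)"
          unfolding lin_apply by (intro sum.cong) auto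
        then show "lin l (\<lambda>i. if i = j then 1 else 0) y = x y" using j by simp
      qed
      then show "x \<in> range (lin l)" by (metis rangeI)
    qed
    show "V.subspace (range (lin l))"
      unfolding V.subspace_def
    proof (intro conjI ballI allI)
      show "0 \<in> range (lin l)"
        by (rule image_eqI[where x="\<lambda>_. 0"]) (auto simp: fun_eq_iff lin_apply)
      fix x y assume "x \<in> range (lin l)" "y \<in> range (lin l)"
      then obtain u v where "x = lin l u" "y = lin l v" by auto
      then show "x + y \<in> range (lin l)"
        by (intro image_eqI[where x="\<lambda>i. u i + v i"]) (auto simp: fun_eq_iff lin_apply distrib_right sum.distrib)
    next
      fix c x assume "x \<in> range (lin l)"
      then obtain u where "x = lin l u" by auto
      then show "sc c x \<in> range (lin l)"
        by (intro image_eqI[where x="\<lambda>i. c * u i"]) (auto simp: fun_eq_iff lin_apply sc_def sum_distrib_left mult.assoc)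
    qed
  qed
qed

lemma lin_sum_set:
  assumes "distinct l"
  shows "(\<Sum>v\<in>set l. sc (u v) v) = lin l (\<lambda>i. u (l!i))"
proof -
  have "set l = (nth l) ` {..<length l}" by (auto simp: in_set_conv_nth image_def)
  moreover have "inj_on (nth l) {..<length l}" using assms by (simp add: inj_on_nth)
  ultimately show ?thesis unfolding lin_def by (simp add: sum.reindex)
qed

lemma indep_list:
  assumes "distinct l" "\<not> V.dependent (set l)" "lin l u = 0" "i < length l"
  shows "u i = 0"
proof (rule ccontr)
  assume ne: "u i \<noteq> 0"
  define u' where "u' v = u (the_inv_into {..<length l} (nth l) v)" for v
  have inj: "inj_on (nth l) {..<length l}" using assms by (simp add: inj_on_nth)
  have u': "u' (l!j) = u j" if "j < length l" for j
    using that inj by (simp add: u'_def the_inv_into_f_f)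
  have "(\<Sum>v\<in>set l. sc (u' v) v) = lin l (\<lambda>j. u' (l!j))" by (rule lin_sum_set[OF assms(1)])
  also have "\<dots> = lin l u" unfolding lin_def by (intro sum.cong) (auto simp: u')
  finally have "(\<Sum>v\<in>set l. sc (u' v) v) = 0" using assms by simp
  moreover have "l!i \<in> set l" "u' (l!i) \<noteq> 0" using assms ne u' by auto
  ultimately have "V.dependent (set l)" by (auto simp: V.dependent_finite)
  with assms show False by simp
qed

lemma indep_list_rev:
  assumes "distinct l" "\<And>u. lin l u = 0 \<Longrightarrow> \<forall>i<length l. u i = 0"
  shows "\<not> V.dependent (set l)"
proof
  assume "V.dependent (set l)"
  then obtain u v where uv: "v \<in> set l" "u v \<noteq> 0" "(\<Sum>v\<in>set l. sc (u v) v) = 0"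
    by (auto simp: V.dependent_finite)
  then have "lin l (\<lambda>i. u (l!i)) = 0" using lin_sum_set[OF assms(1)] by simp
  then have "\<forall>i<length l. u (l!i) = 0" by (rule assms(2))
  with uv show False by (auto simp: in_set_conv_nth)
qed

lemma supp_concat:
  "supp (concat_word n p r) = {i. i < n \<and> p i \<noteq> 0} \<union> (\<lambda>i. i + n) ` supp r"
  by (auto simp: supp_def concat_word_def image_def; metis le_add_diff_inverse2 not_less)

lemma wt_concat:
  assumes "finite (supp r)"
  shows "wt (concat_word n p r) = card {i. i < n \<and> p i \<noteq> 0} + wt r"
proof -
  have "card ({i. i < n \<and> p i \<noteq> 0} \<union> (\<lambda>i. i + n) ` supp r)
      = card {i. i < n \<and> p i \<noteq> 0} + card ((\<lambda>i. i + n) ` supp r)"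
    by (rule card_Un_disjoint) (auto simp: assms)
  also have "card ((\<lambda>i. i + n) ` supp r) = card (supp r)"
    by (rule card_image) (auto simp: inj_on_def)
  finally show ?thesis unfolding wt_def supp_concat .
qed

lemma wt_as_sum:
  assumes "finite S" "supp f \<subseteq> S"
  shows "wt f = (\<Sum>i\<in>S. if f i \<noteq> 0 then 1 else 0)"
proof -
  have "supp f = {i \<in> S. f i \<noteq> 0}" using assms by (auto simp: supp_def)
  then have "wt f = (\<Sum>i\<in>{i \<in> S. f i \<noteq> 0}. 1)" by (simp add: wt_def)
  also have "\<dots> = (\<Sum>i\<in>S. if f i \<noteq> 0 then 1 else 0)"
    using assms(1) by (rule sum.inter_filter)
  finally show ?thesis .
qed

lemma count_mu:
  fixes y y' :: "'a::{field,finite}"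
  assumes "y \<noteq> 0"
  shows "(\<Sum>\<mu>\<in>UNIV-{0}. if y - \<mu> * y' \<noteq> 0 then 1 else (0::nat)) + (if y' \<noteq> 0 then 1 else 0) = card (UNIV::'a set) - 1"
proof -
  have "(\<Sum>\<mu>\<in>UNIV-{0}. if y - \<mu> * y' \<noteq> 0 then 1 else (0::nat)) = (\<Sum>\<mu>\<in>{\<mu>\<in>UNIV-{0}. y - \<mu> * y' \<noteq> 0}. 1)"
    by (rule sum.inter_filter[symmetric]) simp
  also have "\<dots> = card {\<mu>\<in>UNIV-{0}. y - \<mu> * y' \<noteq> 0}" by simp
  finally have eq: "(\<Sum>\<mu>\<in>UNIV-{0}. if y - \<mu> * y' \<noteq> 0 then 1 else (0::nat)) = card {\<mu>\<in>UNIV-{0}. y - \<mu> * y' \<noteq> 0}" .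
  have c2: "card (UNIV::'a set) \<ge> 2"
  proof -
    have "card {0::'a, 1} \<le> card (UNIV::'a set)" by (rule card_mono) auto
    then show ?thesis by simp
  qed
  show ?thesis
  proof (cases "y' = 0")
    case True
    then have "{\<mu>\<in>UNIV-{0}. y - \<mu> * y' \<noteq> 0} = UNIV - {0}" using assms by auto
    then show ?thesis using True eq by (simp add: card_Diff_singleton)
  next
    case False
    then have "{\<mu>\<in>UNIV-{0}. y - \<mu> * y' \<noteq> 0} = UNIV - {0, y / y'}"
      using assms by (auto simp: field_simps)
    moreover have "card (UNIV - {0::'a, y / y'}) = card (UNIV::'a set) - 2"
      using assms False by (subst card_Diff_subset; auto)
    ultimately show ?thesis using False eq c2 by simp
  qed
qed

lemma wt_sum:
  fixes x x' :: "nat \<Rightarrow> 'a::{field,finite}"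
  assumes fin: "finite (supp x)" and sub: "supp x' \<subseteq> supp x"
  shows "(\<Sum>\<mu>\<in>UNIV-{0}. wt (\<lambda>i. x i - \<mu> * x' i)) + wt x' = (card (UNIV::'a set) - 1) * wt x"
proof -
  let ?S = "supp x"
  have "(\<Sum>\<mu>\<in>UNIV-{0}. wt (\<lambda>i. x i - \<mu> * x' i))
      = (\<Sum>\<mu>\<in>UNIV-{0}. \<Sum>i\<in>?S. if x i - \<mu> * x' i \<noteq> 0 then 1 else 0)"
    by (intro sum.cong refl wt_as_sum[OF fin]) (use sub in \<open>auto simp: supp_def\<close>)
  also have "\<dots> = (\<Sum>i\<in>?S. \<Sum>\<mu>\<in>UNIV-{0}. if x i - \<mu> * x' i \<noteq> 0 then 1 else 0)"
    by (rule sum.swap)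
  finally have 1: "(\<Sum>\<mu>\<in>UNIV-{0}. wt (\<lambda>i. x i - \<mu> * x' i)) = \<dots>" .
  have 2: "wt x' = (\<Sum>i\<in>?S. if x' i \<noteq> 0 then 1 else 0)" by (rule wt_as_sum[OF fin sub])
  have "(\<Sum>\<mu>\<in>UNIV-{0}. wt (\<lambda>i. x i - \<mu> * x' i)) + wt x'
     = (\<Sum>i\<in>?S. (\<Sum>\<mu>\<in>UNIV-{0}. if x i - \<mu> * x' i \<noteq> 0 then 1 else 0) + (if x' i \<noteq> 0 then 1 else 0))"
    unfolding 1 2 sum.distrib ..
  also have "\<dots> = (\<Sum>i\<in>?S. card (UNIV::'a set) - 1)"
    by (intro sum.cong refl count_mu) (auto simp: supp_def)
  also have "\<dots> = (card (UNIV::'a set) - 1) * wt x" by (simp add: wt_def)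
  finally show ?thesis .
qed

lemma numeric:
  fixes q A B w2 :: nat
  assumes "q \<ge> 3" "w2 = q * A - A" "A \<ge> q * B" "B \<ge> 1"
  shows "(q - 1) * (w2 + B) < q * (w2 - B)" "B \<le> w2"
proof -
  have w2: "w2 = (q - 1) * A" using assms by (simp add: diff_mult_distrib)
  have "(q - 1) * A \<ge> (q - 1) * (q * B)" using assms by simp
  moreover have "(q - 1) * (q * B) \<ge> 2 * q * B"
  proof -
    have "q - 1 \<ge> 2" using assms by simp
    then show ?thesis by (metis mult.assoc mult.commute mult_le_mono1)
  qed
  ultimately have h: "w2 \<ge> 2 * q * B" using w2 by linarith
  have qB: "q * B \<ge> B" using assms by simp
  then show "B \<le> w2" using h by linarith
  have "int ((q - 1) * (w2 + B)) = (int q - 1) * (int w2 + int B)" using assms(1) by (simp add: of_nat_diff)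
  moreover have "int (q * (w2 - B)) = int q * (int w2 - int B)" using \<open>B \<le> w2\<close> by (simp add: of_nat_diff)
  moreover have "(int q - 1) * (int w2 + int B) < int q * (int w2 - int B)"
  proof -
    have "int w2 \<ge> 2 * int q * int B" using h by (metis of_nat_le_iff of_nat_mult of_nat_numeral)
    moreover have "int B \<ge> 1" using assms by simp
    ultimately show ?thesis by (simp add: algebra_simps)
  qed
  ultimately show "(q - 1) * (w2 + B) < q * (w2 - B)" by linarith
qed

lemma lin_delta: "j < length l \<Longrightarrow> lin l (\<lambda>i. if i = j then 1 else 0) = l!j"
proof
  fix y assume j: "j < length l"
  have "lin l (\<lambda>i. if i = j then 1 else 0) y = (\<Sum>i<length l. if i = j then (l!i) y else 0)"
    unfolding lin_apply by (intro sum.cong) auto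
  then show "lin l (\<lambda>i. if i = j then 1 else 0) y = (l!j) y" using j by simp
qed

theorem proposition4p9:
  fixes C :: "(nat \<Rightarrow> 'a::{field,finite}) set"
    and m q N n' w1 w2 w3 :: nat
    and rs :: "(nat \<Rightarrow> 'a) list"
    and a :: "nat \<Rightarrow> 'a"
  assumes q_def: "q = card (UNIV :: 'a set)"
    and q_prime: "prime q" and q_odd: "odd q"
    and m_ge: "m \<ge> 3" and m_odd: "odd m"
    and N_def: "N = q ^ (m - 1)"
    and w1_def: "w1 = q ^ (m - 1) - q ^ (m - 2) - q ^ ((m - 3) div 2)"
    and w2_def: "w2 = q ^ (m - 1) - q ^ (m - 2)"
    and w3_def: "w3 = q ^ (m - 1) - q ^ (m - 2) + q ^ ((m - 3) div 2)"
    and n'_def: "n' = nat (\<lceil>real q / (real q - 1) * real w1\<rceil> - int w3)"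
    and C_code: "linear_code N m C"
    and C_weights: "nonzero_weights C = {w1, w2, w3}"
    and rs_len: "length rs = m"
    and rs_distinct: "distinct rs"
    and rs_indep: "\<not> module.dependent sc (set rs)"
    and rs_span: "module.span sc (set rs) = C"
    and rs_1: "wt (rs ! 0) = max_weight C"
    and rs_2: "wt (rs ! 1) = min_weight C"
    and a_nz: "\<forall>i<n'. a i \<noteq> 0"
  shows "linear_code (N + n') m (extension_code n' a rs)
      \<and> min_weight (extension_code n' a rs) = w1
      \<and> max_weight (extension_code n' a rs) = w3 + n'
      \<and> minimal_code (extension_code n' a rs)
      \<and> \<not> ashikhmin_barg q (extension_code n' a rs)"
proof -
  have q2: "q \<ge> 2" using q_prime by (simp add: prime_ge_2_nat)
  have q3: "q \<ge> 3" using q2 q_odd by (cases "q = 2") auto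
  define e where "e = (m - 3) div 2"
  have e: "m = 2 * e + 3" using m_ge m_odd unfolding e_def by presburger
  define A where "A = q ^ (m - 2)"
  define B where "B = q ^ ((m - 3) div 2)"
  have Bq: "B = q ^ e" using e by (simp add: B_def)
  have qm1: "q ^ (m - 1) = q * A" using e by (simp add: A_def)
  have w2A: "w2 = q * A - A" using w2_def qm1 A_def by simp
  have AqB: "A \<ge> q * B"
  proof -
    have "m - 2 = (e + 1) + e" using e by simp
    then have "A = q ^ ((e + 1) + e)" by (simp only: A_def)
    then have "A = q ^ (e + 1) * q ^ e" by (simp only: power_add)
    moreover have "q ^ (e + 1) \<ge> q" using q2 by (simp add: self_le_power)
    ultimately show ?thesis using Bq by simp
  qed
  have B1: "B \<ge> 1" using q2 by (simp add: B_def)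
  have w1B: "w1 = w2 - B" using w1_def w2_def B_def by simp
  have w3B: "w3 = w2 + B" using w3_def w2_def B_def by simp
  have N1: "(q - 1) * w3 < q * w1" and Bw2: "B \<le> w2"
    using numeric[OF q3 w2A AqB B1] w1B w3B by auto
  have w12: "w1 \<le> w2" "w2 \<le> w3" using w1B w3B by auto
  have cardq: "card (UNIV :: 'a set) = q" using q_def by simp
  have C_words: "C \<subseteq> words N" and C_sub: "V.subspace C" using C_code by (auto simp: linear_code_def)
  have C_range: "C = range (lin rs)" using rs_span span_list by metis
  have indep: "u i = 0" if "lin rs u = 0" "i < m" for u i
    using indep_list[OF rs_distinct rs_indep that(1)] that rs_len by simp
  have CW: "w1 \<le> wt x \<and> wt x \<le> w3" if "x \<in> C" "x \<noteq> 0" for x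
  proof -
    have "wt x \<in> nonzero_weights C" using that by (auto simp: nonzero_weights_def)
    then show ?thesis using C_weights w12 by auto
  qed
  have finC: "finite (supp x)" if "x \<in> C" for x
  proof -
    have "supp x \<subseteq> {..<N}"
    proof
      fix i assume "i \<in> supp x"
      then have "x i \<noteq> 0" by (simp add: supp_def)
      moreover have "x \<in> words N" using that C_words by blast
      ultimately show "i \<in> {..<N}" unfolding words_def using not_less by auto
    qed
    then show ?thesis by (rule finite_subset) simp
  qed
  have linC: "lin rs u \<in> C" for u using C_range by auto
  have maxC: "max_weight C = w3" and minC: "min_weight C = w1"
    using C_weights w12 by (auto simp: max_weight_def min_weight_def max_def min_def)
  have rs_ne: "rs \<noteq> []" using rs_len m_ge by auto
  define T where "T r = concat_word n' (0::nat\<Rightarrow>'a) r" for r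
  define g1 where "g1 = concat_word n' a (rs!0)"
  define gens where "gens = g1 # map T (tl rs)"
  define P where "P u = concat_word n' (sc (u 0) a) (lin rs u)" for u
  have E_def: "extension_code n' a rs = V.span (set gens)"
    by (simp add: extension_code_def gens_def g1_def T_def)
  have len_gens: "length gens = m" using rs_len rs_ne m_ge by (simp add: gens_def)
  have gens_nth: "gens!i = concat_word n' (if i = 0 then a else 0) (rs!i)" if "i < m" for i
  proof (cases i)
    case 0 then show ?thesis by (simp add: gens_def g1_def)
  next
    case (Suc k)
    then have "k < length (tl rs)" using that rs_len by simp
    then show ?thesis using Suc rs_ne by (simp add: gens_def T_def nth_tl)
  qed
  have Papply: "P u j = (if j < n' then u 0 * a j else lin rs u (j - n'))" for u j
    by (simp add: P_def concat_word_def sc_def)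
  have lin_gens: "lin gens u = P u" for u
  proof
    fix j
    have "lin gens u j = (\<Sum>i<m. u i * (if j < n' then (if i = 0 then a j else 0) else (rs!i) (j - n')))"
      unfolding lin_apply len_gens by (intro sum.cong refl) (simp add: gens_nth concat_word_def)
    also have "\<dots> = P u j"
    proof (cases "j < n'")
      case True
      have "(\<Sum>i<m. u i * (if j < n' then (if i = 0 then a j else 0) else (rs!i) (j - n')))
          = (\<Sum>i<m. if i = 0 then u i * a j else 0)"
        using True by (intro sum.cong) auto
      then show ?thesis using True m_ge by (simp add: Papply)
    next
      case False
      then show ?thesis by (simp add: Papply lin_apply rs_len)
    qed
    finally show "lin gens u j = P u j" .
  qed
  have E_range: "extension_code n' a rs = range P"
    unfolding E_def span_list lin_gens by (simp add: image_def)
  have Psuf: "P u (j + n') = lin rs u j" for u j by (simp add: Papply)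
  have Pcong: "P u = P v" if "\<forall>i<m. u i = v i" for u v
  proof -
    have "lin rs u = lin rs v" unfolding lin_def using that rs_len by (intro sum.cong) auto
    moreover have "u 0 = v 0" using that m_ge by auto
    ultimately show ?thesis by (simp add: P_def)
  qed
  have Pscale: "P (\<lambda>i. c * u i) = sc c (P u)" for c u
    by (auto simp: fun_eq_iff Papply sc_def lin_apply sum_distrib_left mult.assoc)
  have P0: "P u = 0" if "lin rs u = 0" for u
  proof -
    have "u 0 = 0" using indep[OF that] m_ge by simp
    then show ?thesis using that by (simp add: fun_eq_iff Papply)
  qed
  have Pnz: "lin rs u \<noteq> 0" if "P u \<noteq> 0" for u using P0 that by blast
  have wtP: "wt (P u) = (if u 0 = 0 then 0 else n') + wt (lin rs u)" for u
  proof -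
    have "{i. i < n' \<and> sc (u 0) a i \<noteq> 0} = (if u 0 = 0 then {} else {..<n'})"
      using a_nz by (auto simp: sc_def)
    then show ?thesis unfolding P_def by (simp add: wt_concat[OF finC[OF linC]])
  qed
  have Tinj: "r = r'" if "T r = T r'" for r r'
  proof
    fix j have "T r (j + n') = T r' (j + n')" using that by simp
    then show "r j = r' j" by (simp add: T_def concat_word_def)
  qed
  have dist_gens: "distinct gens"
  proof -
    obtain r0 rest where rs_eq: "rs = r0 # rest" using rs_ne by (cases rs) auto
    have "g1 \<notin> T ` set rest"
    proof
      assume "g1 \<in> T ` set rest"
      then obtain r where r: "r \<in> set rest" "g1 = T r" by auto
      have "r0 = r"
      proof
        fix j have "g1 (j + n') = T r (j + n')" using r by simp
        then show "r0 j = r j" by (simp add: g1_def T_def concat_word_def rs_eq)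
      qed
      then show False using r rs_distinct rs_eq by simp
    qed
    moreover have "inj_on T (set rest)" using Tinj by (auto simp: inj_on_def)
    ultimately show ?thesis using rs_distinct rs_eq by (simp add: gens_def distinct_map)
  qed
  have indep_gens: "\<not> V.dependent (set gens)"
  proof (rule indep_list_rev[OF dist_gens])
    fix u assume "lin gens u = 0"
    then have "P u = 0" by (simp add: lin_gens)
    have "lin rs u = 0"
    proof
      fix j show "lin rs u j = 0 j" using Psuf[of u j] \<open>P u = 0\<close> by simp
    qed
    then show "\<forall>i<length gens. u i = 0" using indep len_gens by simp
  qed
  have E_words: "extension_code n' a rs \<subseteq> words (N + n')"
  proof
    fix x assume "x \<in> extension_code n' a rs"
    then obtain u where x: "x = P u" using E_range by auto
    have "lin rs u \<in> words N" using linC C_words by blast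
    then show "x \<in> words (N + n')" unfolding words_def x by (auto simp: Papply)
  qed
  have E_dim: "V.dim (extension_code n' a rs) = m"
    unfolding E_def V.dim_span V.dim_eq_card_independent[OF indep_gens]
    using dist_gens len_gens by (simp add: distinct_card)
  have lc: "linear_code (N + n') m (extension_code n' a rs)"
    unfolding linear_code_def using E_words E_dim by (simp add: E_def)
  have NZE: "nonzero_weights (extension_code n' a rs) = {wt (P u) | u. P u \<noteq> 0}"
    unfolding nonzero_weights_def E_range by auto
  have bnds: "w1 \<le> wt (P u) \<and> wt (P u) \<le> w3 + n'" if "P u \<noteq> 0" for u
    using CW[OF linC Pnz[OF that]] wtP[of u] by auto
  have rsnz: "r \<noteq> 0" if "r \<in> set rs" for r using rs_indep that V.dependent_zero by blast
  define d0 where "d0 = (\<lambda>i::nat. if i = 0 then (1::'a) else 0)"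
  define d1 where "d1 = (\<lambda>i::nat. if i = 1 then (1::'a) else 0)"
  have ld0: "lin rs d0 = rs!0" unfolding d0_def using lin_delta[of 0 rs] rs_len m_ge by simp
  have ld1: "lin rs d1 = rs!1" unfolding d1_def using lin_delta[of 1 rs] rs_len m_ge by simp
  have r0nz: "rs!0 \<noteq> 0" and r1nz: "rs!1 \<noteq> 0" using rsnz rs_len m_ge by auto
  have Pnz': "P u \<noteq> 0" if "lin rs u \<noteq> 0" for u
  proof
    assume "P u = 0"
    have "lin rs u = 0"
    proof
      fix j show "lin rs u j = 0 j" using Psuf[of u j] \<open>P u = 0\<close> by simp
    qed
    with that show False by simp
  qed
  have Pd0: "P d0 \<noteq> 0" "wt (P d0) = w3 + n'"
    using ld0 r0nz Pnz' wtP[of d0] rs_1 maxC by (auto simp: d0_def)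
  have Pd1: "P d1 \<noteq> 0" "wt (P d1) = w1"
    using ld1 r1nz Pnz' wtP[of d1] rs_2 minC by (auto simp: d1_def)
  have finW: "finite (nonzero_weights (extension_code n' a rs))"
    by (rule finite_subset[of _ "{..w3 + n'}"]) (use bnds in \<open>auto simp: NZE\<close>)
  have mem1: "w1 \<in> nonzero_weights (extension_code n' a rs)"
    unfolding NZE mem_Collect_eq by (rule exI[of _ d1]) (simp add: Pd1)
  have mem3: "w3 + n' \<in> nonzero_weights (extension_code n' a rs)"
    unfolding NZE mem_Collect_eq by (rule exI[of _ d0]) (simp add: Pd0)
  have allb: "w1 \<le> x \<and> x \<le> w3 + n'" if "x \<in> nonzero_weights (extension_code n' a rs)" for x
    using that bnds unfolding NZE by blast
  have minE: "min_weight (extension_code n' a rs) = w1"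
    unfolding min_weight_def
    by (rule Min_eqI[OF finW]) (use mem1 allb in auto)
  have maxE: "max_weight (extension_code n' a rs) = w3 + n'"
    unfolding max_weight_def
    by (rule Max_eqI[OF finW]) (use mem3 allb in auto)
  have lin_diff: "lin rs (\<lambda>i. u i - \<mu> * v i) = (\<lambda>j. lin rs u j - \<mu> * lin rs v j)" for u v \<mu>
    by (auto simp: fun_eq_iff lin_apply sum_subtractf sum_distrib_left algebra_simps)
  have minimal: "minimal_code (extension_code n' a rs)"
    unfolding minimal_code_def
  proof (intro ballI impI)
    fix c c' assume cE: "c \<in> extension_code n' a rs" and c'E: "c' \<in> extension_code n' a rs"
      and h: "c \<noteq> 0 \<and> c' \<noteq> 0 \<and> supp c' \<subseteq> supp c"
    obtain u where cu: "c = P u" using cE E_range by auto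
    obtain v where cv: "c' = P v" using c'E E_range by auto
    show "\<exists>l. l \<noteq> 0 \<and> c' = sc l c"
    proof (rule ccontr)
      assume nprop: "\<not> (\<exists>l. l \<noteq> 0 \<and> c' = sc l c)"
      define x where "x = lin rs u"
      define x' where "x' = lin rs v"
      have xnz: "x \<noteq> 0" unfolding x_def by (rule Pnz) (use h cu in simp)
      have x'nz: "x' \<noteq> 0" unfolding x'_def by (rule Pnz) (use h cv in simp)
      have xC: "x \<in> C" "x' \<in> C" using linC x_def x'_def by auto
      have subx: "supp x' \<subseteq> supp x"
      proof
        fix j assume "j \<in> supp x'"
        then have "j + n' \<in> supp c'" using cv Psuf x'_def by (simp add: supp_def)
        then have "j + n' \<in> supp c" using h by blast
        then show "j \<in> supp x" using cu Psuf x_def by (simp add: supp_def)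
      qed
      have each: "w1 \<le> wt (\<lambda>i. x i - \<mu> * x' i)" if "\<mu> \<in> UNIV - {0}" for \<mu>
      proof -
        have eq: "(\<lambda>i. x i - \<mu> * x' i) = lin rs (\<lambda>i. u i - \<mu> * v i)"
          using lin_diff x_def x'_def by simp
        have "(\<lambda>i. x i - \<mu> * x' i) \<noteq> 0"
        proof
          assume "(\<lambda>i. x i - \<mu> * x' i) = 0"
          then have z: "lin rs (\<lambda>i. u i - \<mu> * v i) = 0" using eq by simp
          have "\<forall>i<m. u i = \<mu> * v i" using indep[OF z] by simp
          then have "P u = P (\<lambda>i. \<mu> * v i)" by (rule Pcong)
          then have "c = sc \<mu> c'" using cu cv Pscale by simp
          then have "c' = sc (1 / \<mu>) c" using that by (auto simp: sc_def fun_eq_iff)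
          moreover have "1 / \<mu> \<noteq> 0" using that by simp
          ultimately show False using nprop by blast
        qed
        then show ?thesis using CW[OF linC] eq by simp
      qed
      have s1: "card (UNIV - {0::'a}) * w1 \<le> (\<Sum>\<mu>\<in>UNIV-{0}. wt (\<lambda>i. x i - \<mu> * x' i))"
        using sum_bounded_below[of "UNIV - {0::'a}" w1 "\<lambda>\<mu>. wt (\<lambda>i. x i - \<mu> * x' i)"] each by simp
      have s2: "card (UNIV - {0::'a}) = q - 1" using cardq by (simp add: card_Diff_singleton)
      have s3: "(\<Sum>\<mu>\<in>UNIV-{0}. wt (\<lambda>i. x i - \<mu> * x' i)) + wt x' = (q - 1) * wt x"
        using wt_sum[OF finC[OF xC(1)] subx] cardq by simp
      have s4: "wt x \<le> w3" "w1 \<le> wt x'" using CW xC xnz x'nz by auto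
      have s5: "(q - 1) * wt x \<le> (q - 1) * w3" using s4(1) by (rule mult_le_mono2)
      have "(q - 1) * w1 + w1 \<le> (q - 1) * w3" 
      proof -
        have "(q - 1) * w1 \<le> (\<Sum>\<mu>\<in>UNIV-{0}. wt (\<lambda>i. x i - \<mu> * x' i))" using s1 s2 by simp
        then show ?thesis using s3 s4(2) s5 by linarith
      qed
      moreover have "(q - 1) * w1 + w1 = q * w1" using q2 by (cases q) auto
      ultimately show False using N1 by linarith
    qed
  qed
  have notAB: "\<not> ashikhmin_barg q (extension_code n' a rs)"
  proof -
    have "real q / (real q - 1) * real w1 \<le> of_int \<lceil>real q / (real q - 1) * real w1\<rceil>"
      by (rule le_of_int_ceiling)
    also have "\<dots> \<le> real (w3 + n')"
    proof -
      have "int n' \<ge> \<lceil>real q / (real q - 1) * real w1\<rceil> - int w3" using n'_def by simp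
      then have "\<lceil>real q / (real q - 1) * real w1\<rceil> \<le> int (w3 + n')" by simp
      then show ?thesis by (metis of_int_le_iff of_int_of_nat_eq)
    qed
    finally have h: "real q / (real q - 1) * real w1 \<le> real (w3 + n')" .
    have qpos: "real q - 1 > 0" using q2 by simp
    have h2: "real q * real w1 \<le> (real q - 1) * real (w3 + n')"
      using h qpos by (simp add: field_simps)
    have W: "real (w3 + n') > 0" using w3B B1 by simp
    have "real w1 / real (w3 + n') \<le> (real q - 1) / real q"
      using h2 W q2 by (simp add: divide_simps mult.commute)
    then show ?thesis unfolding ashikhmin_barg_def minE maxE by simp
  qed
  show ?thesis using lc minE maxE minimal notAB by blast
qed

end
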